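(* Let $\mathfrak{G}$ be a topologically Noetherian profinite group. Then every minimal equicontinuous continuous action $\widehat{\Phi}\colon\mathfrak{G}\times\mathfrak{X}\to\mathfrak{X}$ of $\mathfrak{G}$ on a Cantor space $\mathfrak{X}$ is locally quasi-analytic.
   Context: A profinite group is topologically Noetherian if every increasing chain of closed subgroups has a maximal element. An action of a group $G$ by homeomorphisms on a metric Cantor space $\mathfrak{X}$ is locally quasi-analytic if there exists $\varepsilon>0$ such that for every nonempty open $U\subset\mathfrak{X}$ with $\mathrm{diam}(U)<\varepsilon$, every nonempty open $V\subset U$, and all $g_1,g_2\in G$: if the actions of $g_1$ and $g_2$ agree on $V$, then they agree on $U$. Minimal means every orbit is dense. *)

theory Defs
  imports "HOL-Analysis.Analysis" "HOL-Algebra.Group"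
begin

definition totally_disconnected_space :: "'a topology \<Rightarrow> bool" where
  "totally_disconnected_space T \<longleftrightarrow>
     (\<forall>S. S \<subseteq> topspace T \<and> connectedin T S \<longrightarrow> (\<exists>a. S \<subseteq> {a}))"

definition topological_group :: "('g, 'm) monoid_scheme \<Rightarrow> 'g topology \<Rightarrow> bool" where
  "topological_group G T \<longleftrightarrow> group G \<and> topspace T = carrier G \<and>
     continuous_map (prod_topology T T) T (\<lambda>(x, y). x \<otimes>\<^bsub>G\<^esub> y) \<and>
     continuous_map T T (\<lambda>x. inv\<^bsub>G\<^esub> x)"

definition profinite_group :: "('g, 'm) monoid_scheme \<Rightarrow> 'g topology \<Rightarrow> bool" where
  "profinite_group G T \<longleftrightarrow> topological_group G T \<and> compact_space T \<and>
     Hausdorff_space T \<and> totally_disconnected_space T"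

definition topologically_noetherian :: "('g, 'm) monoid_scheme \<Rightarrow> 'g topology \<Rightarrow> bool" where
  "topologically_noetherian G T \<longleftrightarrow>
     (\<forall>H :: nat \<Rightarrow> 'g set.
        (\<forall>n. subgroup (H n) G \<and> closedin T (H n)) \<and> (\<forall>n. H n \<subseteq> H (Suc n))
        \<longrightarrow> (\<exists>n. \<forall>m. H m \<subseteq> H n))"

definition cantor_space :: "'x::metric_space set \<Rightarrow> bool" where
  "cantor_space X \<longleftrightarrow>
     (top_of_set X) homeomorphic_space
       (product_topology (\<lambda>_::nat. discrete_topology (UNIV :: bool set)) UNIV)"

definition continuous_action ::
  "('g, 'm) monoid_scheme \<Rightarrow> 'g topology \<Rightarrow> 'x::metric_space set \<Rightarrow> ('g \<Rightarrow> 'x \<Rightarrow> 'x) \<Rightarrow> bool" where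
  "continuous_action G T X \<Phi> \<longleftrightarrow>
     (\<forall>g\<in>carrier G. \<forall>x\<in>X. \<Phi> g x \<in> X) \<and>
     (\<forall>x\<in>X. \<Phi> \<one>\<^bsub>G\<^esub> x = x) \<and>
     (\<forall>g\<in>carrier G. \<forall>h\<in>carrier G. \<forall>x\<in>X. \<Phi> (g \<otimes>\<^bsub>G\<^esub> h) x = \<Phi> g (\<Phi> h x)) \<and>
     continuous_map (prod_topology T (top_of_set X)) (top_of_set X) (\<lambda>(g, x). \<Phi> g x)"

definition minimal_action :: "('g, 'm) monoid_scheme \<Rightarrow> 'x::metric_space set \<Rightarrow> ('g \<Rightarrow> 'x \<Rightarrow> 'x) \<Rightarrow> bool" where
  "minimal_action G X \<Phi> \<longleftrightarrow> (\<forall>x\<in>X. X \<subseteq> closure ((\<lambda>g. \<Phi> g x) ` carrier G))"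

definition equicontinuous_action :: "('g, 'm) monoid_scheme \<Rightarrow> 'x::metric_space set \<Rightarrow> ('g \<Rightarrow> 'x \<Rightarrow> 'x) \<Rightarrow> bool" where
  "equicontinuous_action G X \<Phi> \<longleftrightarrow>
     (\<forall>e>0. \<exists>d>0. \<forall>x\<in>X. \<forall>y\<in>X. dist x y < d \<longrightarrow>
        (\<forall>g\<in>carrier G. dist (\<Phi> g x) (\<Phi> g y) < e))"

definition locally_quasi_analytic :: "('g, 'm) monoid_scheme \<Rightarrow> 'x::metric_space set \<Rightarrow> ('g \<Rightarrow> 'x \<Rightarrow> 'x) \<Rightarrow> bool" where
  "locally_quasi_analytic G X \<Phi> \<longleftrightarrow>
     (\<exists>e>0. \<forall>U V. openin (top_of_set X) U \<and> U \<noteq> {} \<and> diameter U < e \<and>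
        openin (top_of_set X) V \<and> V \<noteq> {} \<and> V \<subseteq> U \<longrightarrow>
        (\<forall>g1\<in>carrier G. \<forall>g2\<in>carrier G.
           (\<forall>x\<in>V. \<Phi> g1 x = \<Phi> g2 x) \<longrightarrow> (\<forall>x\<in>U. \<Phi> g1 x = \<Phi> g2 x)))"

end

theory Submission
  imports Defs
begin

lemma noeth_max:
  assumes N: "topologically_noetherian G T"
    and ne: "F \<noteq> {}"
    and sub: "\<And>S. S \<in> F \<Longrightarrow> subgroup S G \<and> closedin T S"
  shows "\<exists>M\<in>F. \<forall>S\<in>F. M \<subseteq> S \<longrightarrow> S = M"
proof (rule ccontr)
  assume "\<not> ?thesis"
  then have "\<forall>M\<in>F. \<exists>S. S \<in> F \<and> M \<subset> S" by blast
  then obtain f where f: "\<And>M. M \<in> F \<Longrightarrow> f M \<in> F \<and> M \<subset> f M" by metis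
  obtain M0 where M0: "M0 \<in> F" using ne by blast
  define H where "H n = (f ^^ n) M0" for n
  have HF: "H n \<in> F" for n
    by (induction n) (auto simp: H_def M0 f)
  have Hs: "H n \<subset> H (Suc n)" for n
    using f[OF HF[of n]] by (simp add: H_def)
  have "\<exists>n. \<forall>m. H m \<subseteq> H n"
    using N unfolding topologically_noetherian_def
    using HF sub Hs by blast
  then obtain n where "H (Suc n) \<subseteq> H n" by blast
  with Hs[of n] show False by blast
qed

theorem proposition3p4:
  fixes G :: "('g, 'm) monoid_scheme" and T :: "'g topology"
    and X :: "'x::metric_space set" and \<Phi> :: "'g \<Rightarrow> 'x \<Rightarrow> 'x"
  assumes "profinite_group G T"
    and "topologically_noetherian G T"
    and "cantor_space X"
    and "continuous_action G T X \<Phi>"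
    and "minimal_action G X \<Phi>"
    and "equicontinuous_action G X \<Phi>"
  shows "locally_quasi_analytic G X \<Phi>"
proof -
  have grp: "group G" and tsp: "topspace T = carrier G"
    using assms(1) unfolding profinite_group_def topological_group_def by auto
  interpret group G by (rule grp)
  have inX: "\<And>g x. g \<in> carrier G \<Longrightarrow> x \<in> X \<Longrightarrow> \<Phi> g x \<in> X"
    and one: "\<And>x. x \<in> X \<Longrightarrow> \<Phi> \<one>\<^bsub>G\<^esub> x = x"
    and mul: "\<And>g h x. g \<in> carrier G \<Longrightarrow> h \<in> carrier G \<Longrightarrow> x \<in> X \<Longrightarrow> \<Phi> (g \<otimes>\<^bsub>G\<^esub> h) x = \<Phi> g (\<Phi> h x)"
    and cont: "continuous_map (prod_topology T (top_of_set X)) (top_of_set X) (\<lambda>(g, x). \<Phi> g x)"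
    using assms(4) unfolding continuous_action_def by auto
  have invl: "\<Phi> (inv\<^bsub>G\<^esub> g) (\<Phi> g x) = x" if "g \<in> carrier G" "x \<in> X" for g x
    using that mul[of "inv\<^bsub>G\<^esub> g" g x] one by simp
  have invr: "\<Phi> g (\<Phi> (inv\<^bsub>G\<^esub> g) x) = x" if "g \<in> carrier G" "x \<in> X" for g x
    using that mul[of g "inv\<^bsub>G\<^esub> g" x] one by simp
  have contg: "continuous_map (top_of_set X) (top_of_set X) (\<Phi> g)" if "g \<in> carrier G" for g
  proof -
    have "continuous_map (top_of_set X) (prod_topology T (top_of_set X)) (\<lambda>x. (g, x))"
      using that tsp by (simp add: continuous_map_pairwise o_def)
    from continuous_map_compose[OF this cont] show ?thesis by (simp add: o_def)
  qed
  have contx: "continuous_map T (top_of_set X) (\<lambda>g. \<Phi> g x)" if "x \<in> X" for x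
  proof -
    have "continuous_map T (prod_topology T (top_of_set X)) (\<lambda>g. (g, x))"
      using that by (simp add: continuous_map_pairwise o_def)
    from continuous_map_compose[OF this cont] show ?thesis by (simp add: o_def)
  qed
  define Z where "Z W = {h \<in> carrier G. \<forall>x\<in>W. \<Phi> h x = x}" for W
  have Zsub: "subgroup (Z W) G" if "W \<subseteq> X" for W
  proof
    show "Z W \<subseteq> carrier G" by (auto simp: Z_def)
    show "\<one>\<^bsub>G\<^esub> \<in> Z W" using that one by (auto simp: Z_def)
    show "x \<otimes>\<^bsub>G\<^esub> y \<in> Z W" if "x \<in> Z W" "y \<in> Z W" for x y
      using that \<open>W \<subseteq> X\<close> mul by (auto simp: Z_def)
    show "inv\<^bsub>G\<^esub> x \<in> Z W" if "x \<in> Z W" for x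
      using that \<open>W \<subseteq> X\<close> invl by (auto simp: Z_def) (metis subsetD)
  qed
  have Zclo: "closedin T (Z W)" if "W \<subseteq> X" for W
  proof (cases "W = {}")
    case True
    then show ?thesis using tsp closedin_topspace[of T] by (simp add: Z_def)
  next
    case False
    have "Z W = \<Inter> ((\<lambda>x. {g \<in> topspace T. \<Phi> g x \<in> {x}}) ` W)"
      using False tsp by (auto simp: Z_def)
    moreover have "closedin T {g \<in> topspace T. \<Phi> g x \<in> {x}}" if "x \<in> W" for x
      using that \<open>W \<subseteq> X\<close>
      by (intro closedin_continuous_map_preimage[OF contx]) (auto simp: closedin_subtopology)
    ultimately show ?thesis using False by (auto intro!: closedin_Inter)
  qed
  show ?thesis
  proof (cases "X = {}")
    case True
    then show ?thesis unfolding locally_quasi_analytic_def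
      by (auto intro!: exI[of _ 1] dest: openin_subset)
  next
    case Xne: False
    have cpt: "compact X"
    proof -
      have "compact_space (product_topology (\<lambda>_::nat. discrete_topology (UNIV :: bool set)) UNIV)"
        by (simp add: compact_space_product_topology compact_space_discrete_topology)
      then have "compact_space (top_of_set X)"
        using assms(3) homeomorphic_compact_space unfolding cantor_space_def by blast
      then show ?thesis
        using compactin_subspace[of euclidean X] by simp
    qed
    define F where "F = {Z W | W. openin (top_of_set X) W \<and> W \<noteq> {}}"
    have "F \<noteq> {}" using Xne by (auto simp: F_def)
    moreover have "\<And>S. S \<in> F \<Longrightarrow> subgroup S G \<and> closedin T S"
      using Zsub Zclo by (auto simp: F_def dest: openin_subset)
    ultimately obtain M where "M \<in> F" and Mmax: "\<forall>S\<in>F. M \<subseteq> S \<longrightarrow> S = M"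
      using noeth_max[OF assms(2)] by blast
    then obtain W0 where W0: "openin (top_of_set X) W0" "W0 \<noteq> {}" and M: "M = Z W0"
      by (auto simp: F_def)
    have W0X: "W0 \<subseteq> X" using W0 openin_subset by fastforce
    have key: "Z V = Z U" if "openin (top_of_set X) V" "V \<noteq> {}" "V \<subseteq> U" "U \<subseteq> W0" for U V
    proof -
      have "Z W0 \<subseteq> Z V" using that by (auto simp: Z_def)
      then have "Z V = Z W0" using Mmax M that by (auto simp: F_def)
      moreover have "Z W0 \<subseteq> Z U" "Z U \<subseteq> Z V" using that by (auto simp: Z_def)
      ultimately show ?thesis by blast
    qed
    define C where "C g = {y \<in> X. \<Phi> g y \<in> W0}" for g
    have Copen: "openin (top_of_set X) (C g)" if "g \<in> carrier G" for g
      using openin_continuous_map_preimage[OF contg[OF that] W0(1)] by (simp add: C_def)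
    have cover: "\<exists>g\<in>carrier G. y \<in> C g" if "y \<in> X" for y
    proof -
      obtain z where z: "z \<in> W0" using W0(2) by blast
      obtain Ob where O: "open Ob" "W0 = X \<inter> Ob" using W0(1) by (auto simp: openin_open)
      have "z \<in> closure ((\<lambda>g. \<Phi> g y) ` carrier G)"
        using assms(5) that z W0X unfolding minimal_action_def by blast
      then obtain w where "w \<in> (\<lambda>g. \<Phi> g y) ` carrier G" "w \<in> Ob"
        using O z by (meson IntD2 closure_iff_nhds_not_empty order_refl disjoint_iff)
      then obtain g where "g \<in> carrier G" "\<Phi> g y \<in> Ob" by blast
      then show ?thesis using inX that O by (auto simp: C_def)
    qed
    obtain OC where OC: "\<And>g. g \<in> carrier G \<Longrightarrow> open (OC g) \<and> C g = X \<inter> OC g"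
      using Copen unfolding openin_open by metis
    have "X \<subseteq> \<Union> (OC ` carrier G)" using cover OC by blast
    then obtain e where e: "0 < e" "\<And>x. x \<in> X \<Longrightarrow> \<exists>B \<in> OC ` carrier G. ball x e \<subseteq> B"
      using Heine_Borel_lemma[OF cpt] OC by blast
    show ?thesis unfolding locally_quasi_analytic_def
    proof (intro exI[of _ e] conjI allI impI ballI e(1))
      fix U V g1 g2
      assume UV: "openin (top_of_set X) U \<and> U \<noteq> {} \<and> diameter U < e \<and>
        openin (top_of_set X) V \<and> V \<noteq> {} \<and> V \<subseteq> U"
        and g1: "g1 \<in> carrier G" and g2: "g2 \<in> carrier G"
        and agree: "\<forall>x\<in>V. \<Phi> g1 x = \<Phi> g2 x"
      have UX: "U \<subseteq> X" using UV openin_subset by fastforce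
      have VX: "V \<subseteq> X" using UV openin_subset by fastforce
      obtain x0 where x0: "x0 \<in> U" using UV by blast
      have bU: "bounded U" using UX cpt compact_imp_bounded bounded_subset by blast
      have "U \<subseteq> ball x0 e"
      proof
        fix y assume "y \<in> U"
        then have "dist x0 y \<le> diameter U" using diameter_bounded_bound[OF bU x0] by blast
        then show "y \<in> ball x0 e" using UV by simp
      qed
      then obtain g where g: "g \<in> carrier G" and "U \<subseteq> OC g"
        using e(2)[of x0] x0 UX by blast
      then have UC: "U \<subseteq> C g" using OC UX by blast
      define img where "img A = {y \<in> X. \<Phi> (inv\<^bsub>G\<^esub> g) y \<in> A}" for A
      have img_open: "openin (top_of_set X) (img A)" if "openin (top_of_set X) A" for A
        using openin_continuous_map_preimage[OF contg[of "inv\<^bsub>G\<^esub> g"] that] g by (simp add: img_def)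
      have img_mem: "\<Phi> g x \<in> img A" if "x \<in> A" "A \<subseteq> X" for x A
        using that g inX invl by (auto simp: img_def)
      have img_inv: "\<exists>x\<in>A. y = \<Phi> g x" if "y \<in> img A" for y A
        using that g invr by (auto simp: img_def) (metis)
      have "Z (img V) = Z (img U)"
      proof (rule key)
        show "openin (top_of_set X) (img V)" using img_open UV by blast
        show "img V \<noteq> {}" using UV VX img_mem by blast
        show "img V \<subseteq> img U" using UV by (auto simp: img_def)
        show "img U \<subseteq> W0" using UC g invr by (auto simp: img_def C_def)
      qed
      define k where "k = g \<otimes>\<^bsub>G\<^esub> inv\<^bsub>G\<^esub> g2 \<otimes>\<^bsub>G\<^esub> g1 \<otimes>\<^bsub>G\<^esub> inv\<^bsub>G\<^esub> g"
      have kc: "k \<in> carrier G" using g g1 g2 by (simp add: k_def)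
      have kact: "\<Phi> k (\<Phi> g x) = \<Phi> g (\<Phi> (inv\<^bsub>G\<^esub> g2) (\<Phi> g1 x))" if "x \<in> X" for x
        using that g g1 g2 by (simp add: k_def mul inX invl)
      have "k \<in> Z (img V)"
      proof -
        have "\<Phi> k y = y" if yV: "y \<in> img V" for y
        proof -
          obtain x where x: "x \<in> V" "y = \<Phi> g x" using img_inv[OF yV] by blast
          have "x \<in> X" using x VX by blast
          then show ?thesis using x kact agree g2 invl by simp
        qed
        then show ?thesis using kc by (simp add: Z_def)
      qed
      then have kU: "k \<in> Z (img U)" using \<open>Z (img V) = Z (img U)\<close> by simp
      fix x assume xU: "x \<in> U"
      then have xX: "x \<in> X" using UX by blast
      have "\<Phi> k (\<Phi> g x) = \<Phi> g x" using kU img_mem[OF xU UX] by (simp add: Z_def)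
      then have "\<Phi> g (\<Phi> (inv\<^bsub>G\<^esub> g2) (\<Phi> g1 x)) = \<Phi> g x" using kact xX by simp
      then have "\<Phi> (inv\<^bsub>G\<^esub> g) (\<Phi> g (\<Phi> (inv\<^bsub>G\<^esub> g2) (\<Phi> g1 x))) = \<Phi> (inv\<^bsub>G\<^esub> g) (\<Phi> g x)" by simp
      then have "\<Phi> (inv\<^bsub>G\<^esub> g2) (\<Phi> g1 x) = x" using g g1 g2 xX inX invl by simp
      then have "\<Phi> g2 (\<Phi> (inv\<^bsub>G\<^esub> g2) (\<Phi> g1 x)) = \<Phi> g2 x" by simp
      then show "\<Phi> g1 x = \<Phi> g2 x" using g1 g2 xX inX invr by simp
    qed
  qed
qed

end
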